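(* Let $H$ be a Hilbert space and $T$ a densely defined closed operator on $H$. If $T$ is a quasinormal EP operator, then $(T^{*}T)^{\dagger}T\subset T(T^{*}T)^{\dagger}$.
   Context: A densely defined closed operator $T$ on $H$ is EP if $R(T)$ is closed and $R(T)=R(T^{*})$; it is quasinormal if $T(T^{*}T)=(T^{*}T)T$. For a closed operator $A$ with closed range, $C(A)=D(A)\cap N(A)^{\perp}$ and the Moore–Penrose inverse $A^{\dagger}$ is defined on $R(A)\oplus^{\perp}R(A)^{\perp}$ by $A^{\dagger}y=(A|_{C(A)})^{-1}y$ for $y\in R(A)$ and $A^{\dagger}y=0$ for $y\in R(A)^{\perp}$. Products are on natural domains; $A\subset B$ means $D(A)\subset D(B)$ and $B|_{D(A)}=A$. *)

theory Defs
  imports "HOL-Analysis.Analysis"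
begin

text \<open>The library has no complex inner product spaces, so we introduce the class of
complex Hilbert spaces: a real Banach space carrying a compatible complex scalar
multiplication and a sesquilinear inner product (linear in the second argument)
whose induced norm is the given norm.\<close>

class complex_hilbert = banach +
  fixes scaleC :: "complex \<Rightarrow> 'a \<Rightarrow> 'a"
    and cinner :: "'a \<Rightarrow> 'a \<Rightarrow> complex"
  assumes scaleC_add_right: "scaleC a (x + y) = scaleC a x + scaleC a y"
    and scaleC_add_left: "scaleC (a + b) x = scaleC a x + scaleC b x"
    and scaleC_scaleC: "scaleC a (scaleC b x) = scaleC (a * b) x"
    and scaleC_one: "scaleC 1 x = x"
    and scaleR_scaleC: "scaleR r x = scaleC (complex_of_real r) x"
    and cinner_cnj: "cinner x y = cnj (cinner y x)"
    and cinner_add_left: "cinner (x + y) z = cinner x z + cinner y z"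
    and cinner_scaleC_left: "cinner (scaleC a x) y = cnj a * cinner x y"
    and cinner_self_norm: "cinner x x = complex_of_real ((norm x)\<^sup>2)"

text \<open>An operator on H is a pair (domain, action); values outside the domain are irrelevant.\<close>

type_synonym 'a lop = "'a set \<times> ('a \<Rightarrow> 'a)"

definition dom :: "'a lop \<Rightarrow> 'a set" where "dom T = fst T"
definition app :: "'a lop \<Rightarrow> 'a \<Rightarrow> 'a" where "app T = snd T"

definition csubspace :: "'a::complex_hilbert set \<Rightarrow> bool" where
  "csubspace S \<longleftrightarrow> 0 \<in> S \<and> (\<forall>x\<in>S. \<forall>y\<in>S. x + y \<in> S) \<and> (\<forall>a. \<forall>x\<in>S. scaleC a x \<in> S)"

definition linear_op :: "'a::complex_hilbert lop \<Rightarrow> bool" where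
  "linear_op T \<longleftrightarrow> csubspace (dom T) \<and>
     (\<forall>x\<in>dom T. \<forall>y\<in>dom T. app T (x + y) = app T x + app T y) \<and>
     (\<forall>a. \<forall>x\<in>dom T. app T (scaleC a x) = scaleC a (app T x))"

definition densely_defined :: "'a::complex_hilbert lop \<Rightarrow> bool" where
  "densely_defined T \<longleftrightarrow> closure (dom T) = UNIV"

definition graph :: "'a lop \<Rightarrow> ('a \<times> 'a) set" where
  "graph T = {(x, app T x) | x. x \<in> dom T}"

definition closed_op :: "'a::complex_hilbert lop \<Rightarrow> bool" where
  "closed_op T \<longleftrightarrow> linear_op T \<and> closed (graph T)"

definition ran :: "'a lop \<Rightarrow> 'a set" where "ran T = app T ` dom T"

definition ker :: "'a::complex_hilbert lop \<Rightarrow> 'a set" where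
  "ker T = {x \<in> dom T. app T x = 0}"

definition orth :: "'a::complex_hilbert set \<Rightarrow> 'a set" where
  "orth S = {y. \<forall>x\<in>S. cinner x y = 0}"

definition adj :: "'a::complex_hilbert lop \<Rightarrow> 'a lop" where
  "adj T = ({y. \<exists>z. \<forall>x\<in>dom T. cinner (app T x) y = cinner x z},
            \<lambda>y. THE z. \<forall>x\<in>dom T. cinner (app T x) y = cinner x z)"

definition comp_op :: "'a lop \<Rightarrow> 'a lop \<Rightarrow> 'a lop" where
  "comp_op A B = ({x \<in> dom B. app B x \<in> dom A}, \<lambda>x. app A (app B x))"

definition op_eq :: "'a lop \<Rightarrow> 'a lop \<Rightarrow> bool" where
  "op_eq A B \<longleftrightarrow> dom A = dom B \<and> (\<forall>x\<in>dom A. app A x = app B x)"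

definition op_le :: "'a lop \<Rightarrow> 'a lop \<Rightarrow> bool" where
  "op_le A B \<longleftrightarrow> dom A \<subseteq> dom B \<and> (\<forall>x\<in>dom A. app B x = app A x)"

definition quasinormal :: "'a::complex_hilbert lop \<Rightarrow> bool" where
  "quasinormal T \<longleftrightarrow> op_eq (comp_op T (comp_op (adj T) T)) (comp_op (comp_op (adj T) T) T)"

definition EP :: "'a::complex_hilbert lop \<Rightarrow> bool" where
  "EP T \<longleftrightarrow> closed (ran T) \<and> ran T = ran (adj T)"

definition carrier_op :: "'a::complex_hilbert lop \<Rightarrow> 'a set" where
  "carrier_op A = dom A \<inter> orth (ker A)"

text \<open>Moore--Penrose inverse: defined on R(A) \<oplus> R(A)^\<perp>; for w = y + z with y \<in> R(A),
z \<in> R(A)^\<perp> it returns the unique x \<in> C(A) with A x = y (so it is 0 on R(A)^\<perp>).\<close>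
definition mp_inv :: "'a::complex_hilbert lop \<Rightarrow> 'a lop" where
  "mp_inv A = ({y + z | y z. y \<in> ran A \<and> z \<in> orth (ran A)},
               \<lambda>w. THE x. x \<in> carrier_op A \<and> w - app A x \<in> orth (ran A))"

end

theory Submission imports Defs begin

lemma cinner_add_right: "cinner (x::'a::complex_hilbert) (y + z) = cinner x y + cinner x z"
proof -
  have "cinner x (y + z) = cnj (cinner (y + z) x)" by (rule cinner_cnj)
  also have "\<dots> = cnj (cinner y x) + cnj (cinner z x)" by (simp add: cinner_add_left)
  also have "\<dots> = cinner x y + cinner x z" by (simp add: cinner_cnj[of x y] cinner_cnj[of x z])
  finally show ?thesis .
qed

lemma cinner_scaleC_right: "cinner (x::'a::complex_hilbert) (scaleC a y) = a * cinner x y"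
proof -
  have "cinner x (scaleC a y) = cnj (cinner (scaleC a y) x)" by (rule cinner_cnj)
  also have "\<dots> = a * cnj (cinner y x)" by (simp add: cinner_scaleC_left)
  also have "\<dots> = a * cinner x y" by (simp add: cinner_cnj[of x y])
  finally show ?thesis .
qed

lemma cinner_zero_left[simp]: "cinner (0::'a::complex_hilbert) y = 0"
  using cinner_add_left[of 0 0 y] by simp

lemma cinner_zero_right[simp]: "cinner (x::'a::complex_hilbert) 0 = 0"
  by (simp add: cinner_cnj[of x 0])

lemma scaleC_minus1: "scaleC (-1) (x::'a::complex_hilbert) = - x"
  using scaleR_scaleC[of "-1" x] by simp

lemma cinner_minus_left: "cinner (- x::'a::complex_hilbert) y = - cinner x y"
proof -
  have "cinner x y + cinner (- x) y = 0" using cinner_add_left[of x "-x" y] by simp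
  then show ?thesis by (simp add: eq_neg_iff_add_eq_0 add.commute)
qed

lemma cinner_minus_right: "cinner (x::'a::complex_hilbert) (- y) = - cinner x y"
proof -
  have "cinner x y + cinner x (- y) = 0" using cinner_add_right[of x y "-y"] by simp
  then show ?thesis by (simp add: eq_neg_iff_add_eq_0 add.commute)
qed

lemma cinner_diff_left: "cinner (x - y::'a::complex_hilbert) z = cinner x z - cinner y z"
  using cinner_add_left[of x "-y" z] by (simp add: cinner_minus_left)

lemma cinner_diff_right: "cinner (x::'a::complex_hilbert) (y - z) = cinner x y - cinner x z"
  using cinner_add_right[of x y "-z"] by (simp add: cinner_minus_right)

lemma cinner_self_zero: "cinner (x::'a::complex_hilbert) x = 0 \<longleftrightarrow> x = 0"
  by (simp add: cinner_self_norm)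

lemma norm_add_sq: "(norm (x + y::'a::complex_hilbert))\<^sup>2 = (norm x)\<^sup>2 + (norm y)\<^sup>2 + 2 * Re (cinner x y)"
proof -
  have "complex_of_real ((norm (x + y))\<^sup>2) = cinner (x+y) (x+y)"
    by (simp add: cinner_self_norm)
  also have "\<dots> = cinner x x + cinner x y + cinner y x + cinner y y"
    by (simp add: cinner_add_left cinner_add_right)
  also have "cinner y x = cnj (cinner x y)" by (rule cinner_cnj)
  finally have "complex_of_real ((norm (x + y))\<^sup>2) = cinner x x + cinner y y + (cinner x y + cnj (cinner x y))"
    by simp
  then have "(norm (x + y))\<^sup>2 = Re (cinner x x + cinner y y + (cinner x y + cnj (cinner x y)))"
    by (metis Re_complex_of_real)
  then show ?thesis by (simp add: cinner_self_norm)
qed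

lemma norm_diff_sq: "(norm (x - y::'a::complex_hilbert))\<^sup>2 = (norm x)\<^sup>2 + (norm y)\<^sup>2 - 2 * Re (cinner x y)"
  using norm_add_sq[of x "-y"] by (simp add: cinner_minus_right)

lemma Re_cinner_polar: "Re (cinner (x::'a::complex_hilbert) y) = ((norm (x + y))\<^sup>2 - (norm (x - y))\<^sup>2) / 4"
  using norm_add_sq[of x y] norm_diff_sq[of x y] by simp

lemma Im_cinner: "Im (cinner (x::'a::complex_hilbert) y) = Re (cinner (scaleC \<i> x) y)"
  by (simp add: cinner_scaleC_left)

lemma cinner_polar: "cinner (x::'a::complex_hilbert) y =
   complex_of_real (((norm (x + y))\<^sup>2 - (norm (x - y))\<^sup>2) / 4)
   + \<i> * complex_of_real (((norm (scaleC \<i> x + y))\<^sup>2 - (norm (scaleC \<i> x - y))\<^sup>2) / 4)"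
  by (rule complex_eqI) (simp_all add: Re_cinner_polar[symmetric] Im_cinner)

lemma continuous_cinner_right: "continuous_on UNIV (\<lambda>y. cinner (x::'a::complex_hilbert) y)"
  unfolding cinner_polar by (intro continuous_intros) auto

lemma continuous_cinner_left: "continuous_on UNIV (\<lambda>x. cinner (x::'a::complex_hilbert) y)"
proof -
  have "(\<lambda>x. cinner x y) = (\<lambda>x. cnj (cinner y x))" by (metis cinner_cnj)
  then show ?thesis
    by (simp only:) (rule continuous_on_cnj[OF continuous_cinner_right])
qed


lemma csubspace_add: "csubspace S \<Longrightarrow> x \<in> S \<Longrightarrow> y \<in> S \<Longrightarrow> x + y \<in> S"
  by (simp add: csubspace_def)
lemma csubspace_scaleC: "csubspace S \<Longrightarrow> x \<in> S \<Longrightarrow> scaleC a x \<in> S"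
  by (simp add: csubspace_def)
lemma csubspace_scaleR: "csubspace S \<Longrightarrow> x \<in> S \<Longrightarrow> scaleR r x \<in> S"
  by (simp add: csubspace_def scaleR_scaleC)
lemma csubspace_minus: "csubspace S \<Longrightarrow> x \<in> S \<Longrightarrow> - x \<in> S"
  by (metis csubspace_scaleC scaleC_minus1)
lemma csubspace_diff: "csubspace S \<Longrightarrow> x \<in> S \<Longrightarrow> y \<in> S \<Longrightarrow> x - y \<in> S"
  using csubspace_add[of S x "- y"] csubspace_minus[of S y] by simp
lemma csubspace_zero: "csubspace S \<Longrightarrow> 0 \<in> S"
  by (simp add: csubspace_def)

lemma real_quad_lemma:
  fixes r N :: real
  assumes "N \<ge> 0" and "\<forall>s. 2 * s * r \<le> s\<^sup>2 * N"
  shows "r = 0"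
proof -
  define K where "K = N + 1"
  have K: "K > 0" using assms(1) unfolding K_def by simp
  have "2 * (r / K) * r \<le> (r/K)\<^sup>2 * N" using assms(2) by blast
  moreover have "2 * (r / K) * r = (2*r*r*K) / (K*K)" using K by (simp add: field_simps)
  moreover have "(r/K)\<^sup>2 * N = (r*r*N) / (K*K)" by (simp add: power2_eq_square field_simps)
  ultimately have "(2*r*r*K) / (K*K) \<le> (r*r*N) / (K*K)" by simp
  moreover have "K*K > 0" using K by simp
  ultimately have "2*r*r*K \<le> r*r*N" using divide_le_cancel by blast
  then have "r * r * (N + 2) \<le> 0" unfolding K_def by (simp add: algebra_simps)
  moreover have "r * r * (N + 2) \<ge> 0" using assms(1) by simp
  ultimately have "r * r * (N + 2) = 0" by linarith
  then show ?thesis using assms(1) by simp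
qed

lemma parallelogram: "(norm (a + b::'a::complex_hilbert))\<^sup>2 + (norm (a - b))\<^sup>2 = 2 * (norm a)\<^sup>2 + 2 * (norm b)\<^sup>2"
  using norm_add_sq[of a b] norm_diff_sq[of a b] by simp

lemma projection_exists:
  fixes S :: "'a::complex_hilbert set"
  assumes sub: "csubspace S" and cl: "closed S"
  shows "\<exists>q\<in>S. p - q \<in> orth S"
proof -
  let ?F = "(\<lambda>g. norm (p - g)) ` S"
  define d where "d = Inf ?F"
  have ne: "?F \<noteq> {}" using csubspace_zero[OF sub] by blast
  have bdd: "bdd_below ?F" by (rule bdd_belowI[where m=0]) auto
  have dle: "\<forall>g\<in>S. d \<le> norm (p - g)" unfolding d_def using bdd by (auto intro: cInf_lower)
  have d0: "0 \<le> d" unfolding d_def using ne by (auto intro: cInf_greatest)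
  have "\<forall>n. \<exists>g\<in>S. (norm (p - g))\<^sup>2 < d\<^sup>2 + inverse (real (Suc n))"
  proof
    fix n
    have pos: "0 < inverse (real (Suc n))" by simp
    have "d < sqrt (d\<^sup>2 + inverse (real (Suc n)))"
      by (rule real_less_rsqrt) (use pos in simp)
    then obtain g where "g \<in> S" "norm (p - g) < sqrt (d\<^sup>2 + inverse (real (Suc n)))"
      using cInf_lessD[OF ne] unfolding d_def by blast
    then have "(norm (p - g))\<^sup>2 < (sqrt (d\<^sup>2 + inverse (real (Suc n))))\<^sup>2"
      by (intro power_strict_mono) auto
    also have "\<dots> = d\<^sup>2 + inverse (real (Suc n))"
      by (rule real_sqrt_pow2) (use pos in simp)
    finally have "(norm (p - g))\<^sup>2 < d\<^sup>2 + inverse (real (Suc n))" .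
    then show "\<exists>g\<in>S. (norm (p - g))\<^sup>2 < d\<^sup>2 + inverse (real (Suc n))" using \<open>g \<in> S\<close> by blast
  qed
  then obtain g where gS: "\<And>n. g n \<in> S" and gb: "\<And>n. (norm (p - g n))\<^sup>2 < d\<^sup>2 + inverse (real (Suc n))"
    by metis
  have key: "(norm (g n - g m))\<^sup>2 \<le> 2 * inverse (real (Suc n)) + 2 * inverse (real (Suc m))" for n m
  proof -
    define c where "c = scaleR (1/2) (g n + g m)"
    have cS: "c \<in> S" unfolding c_def by (intro csubspace_scaleR[OF sub] csubspace_add[OF sub] gS)
    have "(p - g n) + (p - g m) = scaleR 2 (p - c)" unfolding c_def by (simp add: algebra_simps scaleR_2)
    then have e1: "norm ((p - g n) + (p - g m)) = 2 * norm (p - c)" by simp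
    have "2 * d \<le> 2 * norm (p - c)" using dle cS by auto
    then have "(2 * d)\<^sup>2 \<le> (2 * norm (p - c))\<^sup>2"
      by (rule power_mono) (use d0 in simp)
    then have "4 * d\<^sup>2 \<le> (norm ((p - g n) + (p - g m)))\<^sup>2"
      unfolding e1 by (simp add: power_mult_distrib)
    moreover have "(norm ((p - g n) - (p - g m)))\<^sup>2 = (norm (g m - g n))\<^sup>2" by simp
    moreover note parallelogram[of "p - g n" "p - g m"] gb[of n] gb[of m]
    ultimately have "(norm (g m - g n))\<^sup>2 \<le> 2 * inverse (real (Suc n)) + 2 * inverse (real (Suc m))"
      by linarith
    then show ?thesis by (simp add: norm_minus_commute)
  qed
  have "Cauchy g"
  proof (rule metric_CauchyI)
    fix e :: real assume "0 < e"
    obtain N :: nat where N: "4 / e\<^sup>2 < real N" using reals_Archimedean2 by blast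
    have e2: "0 < e\<^sup>2" using \<open>0 < e\<close> by simp
    have "4 < real N * e\<^sup>2" using N e2 by (simp add: pos_divide_less_eq)
    also have "\<dots> \<le> real (Suc N) * e\<^sup>2" using e2 by (intro mult_right_mono) auto
    finally have "4 < e\<^sup>2 * real (Suc N)" by (simp add: mult.commute)
    then have NN: "4 * inverse (real (Suc N)) < e\<^sup>2" by (simp add: field_simps)
    show "\<exists>M. \<forall>m\<ge>M. \<forall>n\<ge>M. dist (g m) (g n) < e"
    proof (intro exI allI impI)
      fix m n assume "N \<le> m" "N \<le> n"
      have "inverse (real (Suc m)) \<le> inverse (real (Suc N))" "inverse (real (Suc n)) \<le> inverse (real (Suc N))"
        using \<open>N \<le> m\<close> \<open>N \<le> n\<close> by (simp_all add: le_imp_inverse_le)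
      then have "(norm (g m - g n))\<^sup>2 < e\<^sup>2" using key[of m n] NN by linarith
      then show "dist (g m) (g n) < e" unfolding dist_norm
        using \<open>0 < e\<close> by (simp add: power_less_imp_less_base)
    qed
  qed
  then obtain q where gq: "g \<longlonglongrightarrow> q" using Cauchy_convergent_iff convergent_def by blast
  have qS: "q \<in> S" using closed_sequentially[OF cl] gS gq by blast
  have lim1: "(\<lambda>n. (norm (p - g n))\<^sup>2) \<longlonglongrightarrow> (norm (p - q))\<^sup>2" by (intro tendsto_intros gq)
  have lim2: "(\<lambda>n. d\<^sup>2 + inverse (real (Suc n))) \<longlonglongrightarrow> d\<^sup>2"
    using tendsto_add[OF tendsto_const LIMSEQ_inverse_real_of_nat] by simp
  have qd: "(norm (p - q))\<^sup>2 \<le> d\<^sup>2"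
    by (rule LIMSEQ_le[OF lim1 lim2]) (use gb less_imp_le in blast)
  have minq: "(norm (p - q))\<^sup>2 \<le> (norm (p - h))\<^sup>2" if "h \<in> S" for h
  proof -
    have "d \<le> norm (p - h)" using dle that by blast
    then have "d\<^sup>2 \<le> (norm (p - h))\<^sup>2" by (rule power_mono) (use d0 in simp)
    then show ?thesis using qd by linarith
  qed
  define e where "e = p - q"
  have re0: "Re (cinner e h) = 0" if "h \<in> S" for h
  proof (rule real_quad_lemma[where N="(norm h)\<^sup>2"])
    show "\<forall>s. 2 * s * Re (cinner e h) \<le> s\<^sup>2 * (norm h)\<^sup>2"
    proof
      fix s :: real
      have "q + scaleR s h \<in> S" by (intro csubspace_add[OF sub] qS csubspace_scaleR[OF sub] that)
      then have "(norm (p - (q + scaleR s h)))\<^sup>2 \<ge> (norm (p - q))\<^sup>2" by (rule minq)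
      then have "(norm e)\<^sup>2 \<le> (norm (e - scaleR s h))\<^sup>2" unfolding e_def by (simp add: diff_diff_eq)
      also have "\<dots> = (norm e)\<^sup>2 + s\<^sup>2 * (norm h)\<^sup>2 - 2 * s * Re (cinner e h)"
      proof -
        have "cinner e (scaleR s h) = complex_of_real s * cinner e h"
          by (simp add: scaleR_scaleC cinner_scaleC_right)
        moreover have "(norm (scaleR s h))\<^sup>2 = s\<^sup>2 * (norm h)\<^sup>2"
          by (simp add: power_mult_distrib)
        ultimately show ?thesis by (simp add: norm_diff_sq)
      qed
      finally show "2 * s * Re (cinner e h) \<le> s\<^sup>2 * (norm h)\<^sup>2" by simp
    qed
  qed simp
  have "cinner h e = 0" if "h \<in> S" for h
  proof -
    have "Re (cinner e h) = 0" using re0 that .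
    moreover have "Re (cinner e (scaleC (-\<i>) h)) = 0" using re0 csubspace_scaleC[OF sub that] by blast
    then have "Im (cinner e h) = 0" by (simp add: cinner_scaleC_right)
    ultimately have "cinner e h = 0" by (simp add: complex_eq_iff)
    then show ?thesis by (metis cinner_cnj complex_cnj_zero)
  qed
  then show ?thesis using qS unfolding e_def orth_def by blast
qed


instantiation prod :: (complex_hilbert, complex_hilbert) complex_hilbert
begin
definition scaleC_prod_def: "scaleC a p = (scaleC a (fst p), scaleC a (snd p))"
definition cinner_prod_def: "cinner p q = cinner (fst p) (fst q) + cinner (snd p) (snd q)"
instance
proof
  fix a b :: complex and x y :: "'a \<times> 'b" and r :: real
  show "scaleC a (x + y) = scaleC a x + scaleC a y"
    by (simp add: scaleC_prod_def scaleC_add_right)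
  show "scaleC (a + b) x = scaleC a x + scaleC b x"
    by (simp add: scaleC_prod_def scaleC_add_left)
  show "scaleC a (scaleC b x) = scaleC (a * b) x"
    by (simp add: scaleC_prod_def scaleC_scaleC)
  show "scaleC 1 x = x"
    by (simp add: scaleC_prod_def scaleC_one)
  show "scaleR r x = scaleC (complex_of_real r) x"
    by (simp add: scaleC_prod_def scaleR_scaleC prod_eq_iff)
  show "cinner x y = cnj (cinner y x)"
    by (simp add: cinner_prod_def cinner_cnj[of "fst x"] cinner_cnj[of "snd x"])
next
  fix x y z :: "'a \<times> 'b"
  show "cinner (x + y) z = cinner x z + cinner y z"
    by (simp add: cinner_prod_def cinner_add_left)
next
  fix a :: complex and x y :: "'a \<times> 'b"
  show "cinner (scaleC a x) y = cnj a * cinner x y"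
    by (simp add: cinner_prod_def scaleC_prod_def cinner_scaleC_left distrib_left)
next
  fix x :: "'a \<times> 'b"
  show "cinner x x = complex_of_real ((norm x)\<^sup>2)"
    by (simp add: cinner_prod_def norm_prod_def cinner_self_norm)
qed
end

lemma orth_diff: "a \<in> orth X \<Longrightarrow> b \<in> orth X \<Longrightarrow> a - b \<in> orth (X::'a::complex_hilbert set)"
  by (simp add: orth_def cinner_diff_right)

lemma orth_orth:
  fixes S :: "'a::complex_hilbert set"
  assumes "csubspace S" "closed S" "v \<in> orth (orth S)"
  shows "v \<in> S"
proof -
  obtain q where q: "q \<in> S" "v - q \<in> orth S" using projection_exists[OF assms(1,2)] by blast
  have "cinner y q = 0" if "y \<in> orth S" for y
  proof -
    have "cinner q y = 0" using that q(1) unfolding orth_def by blast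
    then show ?thesis using cinner_cnj[of y q] by simp
  qed
  then have "q \<in> orth (orth S)" unfolding orth_def by blast
  then have "v - q \<in> orth (orth S)" using orth_diff assms(3) by blast
  then have "cinner (v - q) (v - q) = 0" using q(2) unfolding orth_def by blast
  then have "v - q = 0" using cinner_self_zero by blast
  then show ?thesis using q(1) by simp
qed

lemma dom_comp[simp]: "dom (comp_op A B) = {x \<in> dom B. app B x \<in> dom A}"
  by (simp add: comp_op_def dom_def app_def)
lemma app_comp[simp]: "app (comp_op A B) x = app A (app B x)"
  by (simp add: comp_op_def dom_def app_def)

lemma adj_unique:
  fixes T :: "'a::complex_hilbert lop"
  assumes "densely_defined T" "\<forall>x\<in>dom T. cinner x z1 = cinner x z2"
  shows "z1 = z2"
proof -
  have cl: "closed {x. cinner x (z1 - z2) = 0}"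
    by (rule closed_Collect_eq[OF continuous_cinner_left continuous_on_const])
  have "dom T \<subseteq> {x. cinner x (z1 - z2) = 0}" using assms(2) by (auto simp: cinner_diff_right)
  then have "closure (dom T) \<subseteq> {x. cinner x (z1 - z2) = 0}" using cl by (rule closure_minimal)
  then have "cinner (z1 - z2) (z1 - z2) = 0" using assms(1) unfolding densely_defined_def by blast
  then have "z1 - z2 = 0" using cinner_self_zero by blast
  then show ?thesis by simp
qed

lemma adj_char:
  fixes T :: "'a::complex_hilbert lop"
  assumes dd: "densely_defined T" and P: "\<forall>x\<in>dom T. cinner (app T x) y = cinner x z"
  shows "y \<in> dom (adj T) \<and> app (adj T) y = z"
proof -
  have d: "y \<in> dom (adj T)" using P unfolding adj_def dom_def by auto
  have "(THE z. \<forall>x\<in>dom T. cinner (app T x) y = cinner x z) = z"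
  proof (rule the_equality)
    show "\<forall>x\<in>dom T. cinner (app T x) y = cinner x z" by (rule P)
  next
    fix z' assume "\<forall>x\<in>dom T. cinner (app T x) y = cinner x z'"
    then have "\<forall>x\<in>dom T. cinner x z' = cinner x z" using P by simp
    then show "z' = z" by (rule adj_unique[OF dd])
  qed
  then have "app (adj T) y = z" unfolding adj_def app_def by simp
  with d show ?thesis by simp
qed

lemma adj_prop:
  fixes T :: "'a::complex_hilbert lop"
  assumes "densely_defined T" "y \<in> dom (adj T)" "x \<in> dom T"
  shows "cinner (app T x) y = cinner x (app (adj T) y)"
proof -
  obtain z where z: "\<forall>x\<in>dom T. cinner (app T x) y = cinner x z"
    using assms(2) unfolding adj_def dom_def by auto
  then have "app (adj T) y = z" using adj_char[OF assms(1) z] by blast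
  then show ?thesis using z assms(3) by simp
qed

lemma adj_diff:
  fixes T :: "'a::complex_hilbert lop"
  assumes dd: "densely_defined T" and "y1 \<in> dom (adj T)" "y2 \<in> dom (adj T)"
  shows "y1 - y2 \<in> dom (adj T) \<and> app (adj T) (y1 - y2) = app (adj T) y1 - app (adj T) y2"
proof (rule adj_char[OF dd])
  show "\<forall>x\<in>dom T. cinner (app T x) (y1 - y2) = cinner x (app (adj T) y1 - app (adj T) y2)"
    using adj_prop[OF dd assms(2)] adj_prop[OF dd assms(3)] by (simp add: cinner_diff_right)
qed

lemma scaleC_zero_left: "scaleC 0 (x::'a::complex_hilbert) = 0"
  using scaleR_scaleC[of 0 x] by simp

lemma scaleC_zero_right: "scaleC a (0::'a::complex_hilbert) = 0"
  using scaleC_add_right[of a "0::'a" 0] by simp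

lemma lin_diff:
  assumes "linear_op T" "x \<in> dom T" "y \<in> dom T"
  shows "x - y \<in> dom T \<and> app T (x - y) = app T x - app T y"
proof -
  have ds: "csubspace (dom T)"
    and ad: "\<forall>x\<in>dom T. \<forall>y\<in>dom T. app T (x + y) = app T x + app T y"
    and sc: "\<forall>a. \<forall>x\<in>dom T. app T (scaleC a x) = scaleC a (app T x)"
    using assms(1) unfolding linear_op_def by auto
  have m: "scaleC (-1) y \<in> dom T" using csubspace_scaleC[OF ds assms(3)] .
  have "x + scaleC (-1) y \<in> dom T" using csubspace_add[OF ds assms(2) m] .
  moreover have "app T (x + scaleC (-1) y) = app T x + scaleC (-1) (app T y)"
    using ad sc assms(2,3) m by simp
  ultimately show ?thesis by (simp add: scaleC_minus1)
qed

lemma lin_zero: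
  assumes "linear_op T" shows "0 \<in> dom T \<and> app T 0 = 0"
proof -
  have ds: "csubspace (dom T)"
    and sc: "\<forall>a. \<forall>x\<in>dom T. app T (scaleC a x) = scaleC a (app T x)"
    using assms(1) unfolding linear_op_def by auto
  have z: "0 \<in> dom T" using csubspace_zero[OF ds] .
  have "app T (scaleC 0 0) = scaleC 0 (app T 0)" using sc z by blast
  then have "app T 0 = 0" by (simp add: scaleC_zero_left)
  with z show ?thesis by simp
qed

lemma ran_csubspace:
  assumes "linear_op T" shows "csubspace (ran T)"
proof -
  have ds: "csubspace (dom T)"
    and ad: "\<forall>x\<in>dom T. \<forall>y\<in>dom T. app T (x + y) = app T x + app T y"
    and sc: "\<forall>a. \<forall>x\<in>dom T. app T (scaleC a x) = scaleC a (app T x)"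
    using assms(1) unfolding linear_op_def by auto
  have "0 \<in> ran T" using lin_zero[OF assms] unfolding ran_def by (metis image_eqI)
  moreover have "u + v \<in> ran T" if uv: "u \<in> ran T" "v \<in> ran T" for u v
  proof -
    obtain a b where ab: "a \<in> dom T" "b \<in> dom T" "u = app T a" "v = app T b"
      using uv unfolding ran_def by blast
    then have "u + v = app T (a + b)" using ad by simp
    moreover have "a + b \<in> dom T" using csubspace_add[OF ds ab(1,2)] .
    ultimately show ?thesis unfolding ran_def by blast
  qed
  moreover have "scaleC c u \<in> ran T" if uu: "u \<in> ran T" for u c
  proof -
    obtain a where a: "a \<in> dom T" "u = app T a" using uu unfolding ran_def by blast
    then have "scaleC c u = app T (scaleC c a)" using sc by simp
    moreover have "scaleC c a \<in> dom T" using csubspace_scaleC[OF ds a(1)] .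
    ultimately show ?thesis unfolding ran_def by blast
  qed
  ultimately show ?thesis unfolding csubspace_def by blast
qed

lemma ker_csubspace:
  assumes "linear_op T" shows "csubspace (ker T)"
proof -
  have ds: "csubspace (dom T)"
    and ad: "\<forall>x\<in>dom T. \<forall>y\<in>dom T. app T (x + y) = app T x + app T y"
    and sc: "\<forall>a. \<forall>x\<in>dom T. app T (scaleC a x) = scaleC a (app T x)"
    using assms(1) unfolding linear_op_def by auto
  have "0 \<in> ker T" using lin_zero[OF assms] unfolding ker_def by blast
  moreover have "u + v \<in> ker T" if "u \<in> ker T" "v \<in> ker T" for u v
    using that ad csubspace_add[OF ds] unfolding ker_def by simp
  moreover have "scaleC c u \<in> ker T" if "u \<in> ker T" for u c
    using that sc csubspace_scaleC[OF ds] unfolding ker_def by (simp add: scaleC_zero_right)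
  ultimately show ?thesis unfolding csubspace_def by blast
qed

lemma graph_csubspace:
  assumes "linear_op T" shows "csubspace (graph T)"
proof -
  have ds: "csubspace (dom T)"
    and ad: "\<forall>x\<in>dom T. \<forall>y\<in>dom T. app T (x + y) = app T x + app T y"
    and sc: "\<forall>a. \<forall>x\<in>dom T. app T (scaleC a x) = scaleC a (app T x)"
    using assms(1) unfolding linear_op_def by auto
  have "(0, 0) \<in> graph T" using lin_zero[OF assms] unfolding graph_def by force
  then have "0 \<in> graph T" by (simp add: zero_prod_def)
  moreover have "u + v \<in> graph T" if uv: "u \<in> graph T" "v \<in> graph T" for u v
  proof -
    obtain a b where ab: "a \<in> dom T" "b \<in> dom T" "u = (a, app T a)" "v = (b, app T b)"
      using uv unfolding graph_def by blast
    then have "u + v = (a + b, app T (a + b))" using ad by simp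
    moreover have "a + b \<in> dom T" using csubspace_add[OF ds ab(1,2)] .
    ultimately show ?thesis unfolding graph_def by blast
  qed
  moreover have "scaleC c u \<in> graph T" if uu: "u \<in> graph T" for u c
  proof -
    obtain a where a: "a \<in> dom T" "u = (a, app T a)" using uu unfolding graph_def by blast
    then have "scaleC c u = (scaleC c a, app T (scaleC c a))" using sc by (simp add: scaleC_prod_def)
    moreover have "scaleC c a \<in> dom T" using csubspace_scaleC[OF ds a(1)] .
    ultimately show ?thesis unfolding graph_def by blast
  qed
  ultimately show ?thesis unfolding csubspace_def by blast
qed

theorem lemma2p16:
  fixes T :: "'a::complex_hilbert lop"
  assumes "densely_defined T" and "closed_op T"
    and "quasinormal T" and "EP T"
  shows "op_le (comp_op (mp_inv (comp_op (adj T) T)) T)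
               (comp_op T (mp_inv (comp_op (adj T) T)))"
proof -
  note dd = assms(1)
  have lin: "linear_op T" and grc: "closed (graph T)" using assms(2) by (auto simp: closed_op_def)
  have Mcl: "closed (ran T)" and Meq: "ran T = ran (adj T)" using assms(4) by (auto simp: EP_def)
  have Msub: "csubspace (ran T)" by (rule ran_csubspace[OF lin])
  define A where "A = comp_op (adj T) T"
  define Ts where "Ts = adj T"
  have Ts_prop: "\<And>x y. y \<in> dom Ts \<Longrightarrow> x \<in> dom T \<Longrightarrow> cinner (app T x) y = cinner x (app Ts y)"
    unfolding Ts_def using adj_prop[OF dd] by blast
  have Ts_diff: "\<And>y1 y2. y1 \<in> dom Ts \<Longrightarrow> y2 \<in> dom Ts \<Longrightarrow> y1 - y2 \<in> dom Ts \<and> app Ts (y1 - y2) = app Ts y1 - app Ts y2"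
    unfolding Ts_def using adj_diff[OF dd] by blast
  have s3: "y \<in> dom Ts \<and> app Ts y = 0" if hy: "y \<in> orth (ran T)" for y
    unfolding Ts_def
  proof (rule adj_char[OF dd])
    show "\<forall>x\<in>dom T. cinner (app T x) y = cinner x 0"
      using hy by (auto simp: orth_def ran_def)
  qed
  have s4: "cinner k m = 0" if km: "k \<in> ker T" "m \<in> ran T" for k m
  proof -
    obtain v where v: "v \<in> dom Ts" "m = app Ts v" using km(2) Meq unfolding Ts_def ran_def by blast
    have kd: "k \<in> dom T" using km(1) by (simp add: ker_def)
    have "cinner (app T k) v = cinner k (app Ts v)" by (rule Ts_prop[OF v(1) kd])
    then show ?thesis using km(1) v by (simp add: ker_def)
  qed
  have s5: "y \<in> dom T \<and> app T y = 0" if hy: "y \<in> orth (ran T)" for y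
  proof -
    have "(y, 0) \<in> orth (orth (graph T))"
      unfolding orth_def
    proof (safe)
      fix a b assume ab: "\<forall>g\<in>graph T. cinner g (a, b) = 0"
      have "\<forall>x\<in>dom T. cinner (app T x) b = cinner x (- a)"
      proof
        fix x assume "x \<in> dom T"
        then have "(x, app T x) \<in> graph T" by (auto simp: graph_def)
        then have "cinner x a + cinner (app T x) b = 0" using ab by (auto simp: cinner_prod_def)
        then show "cinner (app T x) b = cinner x (- a)" by (simp add: cinner_minus_right eq_neg_iff_add_eq_0 add.commute)
      qed
      then have b: "b \<in> dom Ts" "app Ts b = - a" using adj_char[OF dd] unfolding Ts_def by blast+
      have "app Ts b \<in> ran T" using b(1) Meq unfolding Ts_def ran_def by blast
      then have "cinner (app Ts b) y = 0" using hy by (auto simp: orth_def)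
      then show "cinner (a, b) (y, 0) = 0" using b(2) by (simp add: cinner_prod_def cinner_minus_left)
    qed
    then have "(y, 0) \<in> graph T" using orth_orth[OF graph_csubspace[OF lin] grc] by blast
    then show ?thesis by (auto simp: graph_def)
  qed
  have domA: "dom A = {x \<in> dom T. app T x \<in> dom Ts}" and appA: "\<And>x. app A x = app Ts (app T x)"
    unfolding A_def Ts_def by simp_all
  have ranA: "ran A = ran T"
  proof
    show "ran A \<subseteq> ran T"
    proof
      fix m assume "m \<in> ran A"
      then obtain x where x: "x \<in> dom A" "m = app A x" unfolding ran_def by blast
      then have "app T x \<in> dom Ts" "m = app Ts (app T x)" by (simp_all add: domA appA)
      then have "m \<in> ran Ts" unfolding ran_def by blast
      then show "m \<in> ran T" using Meq unfolding Ts_def by simp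
    qed
    show "ran T \<subseteq> ran A"
    proof
      fix m assume "m \<in> ran T"
      then obtain v where v: "v \<in> dom Ts" "m = app Ts v" using Meq unfolding Ts_def ran_def by blast
      obtain v1 where v1: "v1 \<in> ran T" "v - v1 \<in> orth (ran T)" using projection_exists[OF Msub Mcl] by blast
      have vv1: "v - v1 \<in> dom Ts" "app Ts (v - v1) = 0" using s3[OF v1(2)] by auto
      have "v - (v - v1) \<in> dom Ts \<and> app Ts (v - (v - v1)) = app Ts v - app Ts (v - v1)"
        by (rule Ts_diff[OF v(1) vv1(1)])
      then have v1d: "v1 \<in> dom Ts" "app Ts v1 = m" using v vv1(2) by simp_all
      obtain w where w: "w \<in> dom T" "v1 = app T w" using v1(1) unfolding ran_def by blast
      then have "w \<in> dom A" "app A w = m" using v1d by (auto simp: domA appA)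
      then show "m \<in> ran A" unfolding ran_def by blast
    qed
  qed
  have kerA: "ker A = ker T"
  proof
    show "ker A \<subseteq> ker T"
    proof
      fix x assume "x \<in> ker A"
      then have x: "x \<in> dom T" "app T x \<in> dom Ts" "app Ts (app T x) = 0" by (auto simp: ker_def domA appA)
      have "cinner (app T x) (app T x) = cinner x (app Ts (app T x))" by (rule Ts_prop[OF x(2) x(1)])
      then show "x \<in> ker T" using x cinner_self_zero by (auto simp: ker_def)
    qed
    show "ker T \<subseteq> ker A"
    proof
      fix x assume x: "x \<in> ker T"
      have "(0::'a) \<in> orth (ran T)" by (simp add: orth_def)
      then have "0 \<in> dom Ts" "app Ts 0 = 0" using s3 by blast+
      then show "x \<in> ker A" using x by (simp add: ker_def domA appA)
    qed
  qed
  have Kcl: "closed (ker A)"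
  proof -
    have "ker T = (\<lambda>x. (x, 0::'a)) -` graph T" by (auto simp: ker_def graph_def)
    moreover have "closed ((\<lambda>x. (x, 0::'a)) -` graph T)"
      by (rule continuous_closed_vimage[OF grc]) (intro continuous_intros)
    ultimately show ?thesis using kerA by simp
  qed
  have Ksub: "csubspace (ker A)" using kerA ker_csubspace[OF lin] by simp
  have A_diff: "x - y \<in> dom A \<and> app A (x - y) = app A x - app A y" if "x \<in> dom A" "y \<in> dom A" for x y
  proof -
    have x: "x \<in> dom T" "app T x \<in> dom Ts" and y: "y \<in> dom T" "app T y \<in> dom Ts"
      using that by (simp_all add: domA)
    have l: "x - y \<in> dom T" "app T (x - y) = app T x - app T y" using lin_diff[OF lin x(1) y(1)] by simp_all
    have t: "app T x - app T y \<in> dom Ts" "app Ts (app T x - app T y) = app Ts (app T x) - app Ts (app T y)"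
      using Ts_diff[OF x(2) y(2)] by simp_all
    show ?thesis using l t by (simp add: domA appA)
  qed
  have mp_ex: "\<exists>!w. w \<in> carrier_op A \<and> p - app A w \<in> orth (ran A)" for p
  proof (rule ex_ex1I)
    obtain m where m: "m \<in> ran T" "p - m \<in> orth (ran T)" using projection_exists[OF Msub Mcl] by blast
    have "m \<in> ran A" using m(1) ranA by simp
    then obtain v where v: "v \<in> dom A" "m = app A v" unfolding ran_def by blast
    obtain v0 where v0: "v0 \<in> ker A" "v - v0 \<in> orth (ker A)" using projection_exists[OF Ksub Kcl] by blast
    have v0d: "v0 \<in> dom A" "app A v0 = 0" using v0(1) unfolding ker_def by simp_all
    have "v - v0 \<in> dom A \<and> app A (v - v0) = app A v - app A v0" by (rule A_diff[OF v(1) v0d(1)])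
    then have vv: "v - v0 \<in> dom A" "app A (v - v0) = m" using v(2) v0d(2) by simp_all
    have c: "v - v0 \<in> carrier_op A" unfolding carrier_op_def using vv(1) v0(2) by blast
    have "p - app A (v - v0) \<in> orth (ran A)" using m(2) ranA vv(2) by simp
    with c show "\<exists>w. w \<in> carrier_op A \<and> p - app A w \<in> orth (ran A)" by blast
  next
    fix w1 w2 assume w1: "w1 \<in> carrier_op A \<and> p - app A w1 \<in> orth (ran A)"
      and w2: "w2 \<in> carrier_op A \<and> p - app A w2 \<in> orth (ran A)"
    have w1d: "w1 \<in> dom A" "w1 \<in> orth (ker A)" using w1 unfolding carrier_op_def by simp_all
    have w2d: "w2 \<in> dom A" "w2 \<in> orth (ker A)" using w2 unfolding carrier_op_def by simp_all
    have dd': "w1 - w2 \<in> dom A \<and> app A (w1 - w2) = app A w1 - app A w2" by (rule A_diff[OF w1d(1) w2d(1)])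
    have "(p - app A w2) - (p - app A w1) \<in> orth (ran A)"
      by (rule orth_diff) (use w1 w2 in simp_all)
    then have o: "app A (w1 - w2) \<in> orth (ran A)" using dd' by simp
    have "app A (w1 - w2) \<in> ran A" using dd' unfolding ran_def by blast
    then have "cinner (app A (w1 - w2)) (app A (w1 - w2)) = 0" using o unfolding orth_def by blast
    then have "app A (w1 - w2) = 0" using cinner_self_zero by blast
    then have k: "w1 - w2 \<in> ker A" using dd' unfolding ker_def by simp
    have "w1 - w2 \<in> orth (ker A)" by (rule orth_diff[OF w1d(2) w2d(2)])
    then have "cinner (w1 - w2) (w1 - w2) = 0" using k unfolding orth_def by blast
    then have "w1 - w2 = 0" using cinner_self_zero by blast
    then show "w1 = w2" by simp
  qed
  have mp_prop: "app (mp_inv A) p \<in> carrier_op A \<and> p - app A (app (mp_inv A) p) \<in> orth (ran A)" for p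
  proof -
    have e: "app (mp_inv A) p = (THE w. w \<in> carrier_op A \<and> p - app A w \<in> orth (ran A))"
      unfolding mp_inv_def by (simp add: app_def)
    show ?thesis unfolding e by (rule theI'[OF mp_ex[of p]])
  qed
  have mp_dom: "p \<in> dom (mp_inv A)" for p
  proof -
    obtain m where m: "m \<in> ran T" "p - m \<in> orth (ran T)" using projection_exists[OF Msub Mcl] by blast
    have "p = m + (p - m)" by simp
    moreover have "m \<in> ran A" "p - m \<in> orth (ran A)" using m ranA by simp_all
    ultimately have "\<exists>y z. p = y + z \<and> y \<in> ran A \<and> z \<in> orth (ran A)" by blast
    then show ?thesis unfolding mp_inv_def dom_def by simp
  qed
  have qn: "op_eq (comp_op T A) (comp_op A T)" using assms(3) unfolding quasinormal_def A_def Ts_def .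
  have main: "app (mp_inv A) x \<in> dom T \<and> app T (app (mp_inv A) x) = app (mp_inv A) (app T x)"
    if xD: "x \<in> dom T" for x
  proof -
    define w where "w = app (mp_inv A) x"
    define u where "u = app (mp_inv A) (app T x)"
    have w1: "w \<in> carrier_op A" and w2': "x - app A w \<in> orth (ran A)" using mp_prop[of x] unfolding w_def by simp_all
    have w2: "x - app A w \<in> orth (ran T)" using w2' ranA by simp
    have u1: "u \<in> carrier_op A" and u2': "app T x - app A u \<in> orth (ran A)" using mp_prop[of "app T x"] unfolding u_def by simp_all
    have u2: "app T x - app A u \<in> orth (ran T)" using u2' ranA by simp
    have uA: "u \<in> dom A" using u1 unfolding carrier_op_def by simp
    have Txr: "app T x \<in> ran T" using xD unfolding ran_def by blast
    have "app A u \<in> ran A" using uA unfolding ran_def by blast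
    then have Aur: "app A u \<in> ran T" using ranA by simp
    have "app T x - app A u \<in> ran T" by (rule csubspace_diff[OF Msub Txr Aur])
    then have "cinner (app T x - app A u) (app T x - app A u) = 0" using u2 unfolding orth_def by blast
    then have "app T x - app A u = 0" using cinner_self_zero by blast
    then have Au: "app A u = app T x" by simp
    have wA: "w \<in> dom A" using w1 unfolding carrier_op_def by simp
    then have wD: "w \<in> dom T" by (simp add: domA)
    have y: "x - app A w \<in> dom T" "app T (x - app A w) = 0" using s5[OF w2] by simp_all
    have "x - (x - app A w) \<in> dom T \<and> app T (x - (x - app A w)) = app T x - app T (x - app A w)"
      by (rule lin_diff[OF lin xD y(1)])
    then have AwD: "app A w \<in> dom T" "app T (app A w) = app T x" using y(2) by simp_all
    have wTA: "w \<in> dom (comp_op T A)" using wA AwD by simp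
    have qd: "dom (comp_op T A) = dom (comp_op A T)"
      and qv: "\<forall>x\<in>dom (comp_op T A). app (comp_op T A) x = app (comp_op A T) x"
      using qn unfolding op_eq_def by blast+
    have w3: "w \<in> dom (comp_op A T)" using wTA unfolding qd .
    have eqq: "app (comp_op T A) w = app (comp_op A T) w" using qv wTA by blast
    have TwA: "app T w \<in> dom A" using w3 by simp
    have "app T (app A w) = app A (app T w)" using eqq by simp
    then have ATw: "app A (app T w) = app T x" using AwD by simp
    have "app T w - u \<in> dom A \<and> app A (app T w - u) = app A (app T w) - app A u" by (rule A_diff[OF TwA uA])
    then have "app T w - u \<in> dom A" "app A (app T w - u) = 0" using ATw Au by simp_all
    then have k: "app T w - u \<in> ker A" unfolding ker_def by simp
    have Twr: "app T w \<in> ran T" using wD unfolding ran_def by blast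
    have "cinner kk (app T w) = 0" if kk: "kk \<in> ker A" for kk
    proof -
      have "kk \<in> ker T" using kk kerA by simp
      then show ?thesis using s4 Twr by blast
    qed
    then have Two: "app T w \<in> orth (ker A)" unfolding orth_def by blast
    have uo: "u \<in> orth (ker A)" using u1 unfolding carrier_op_def by simp
    have "app T w - u \<in> orth (ker A)" by (rule orth_diff[OF Two uo])
    then have "cinner (app T w - u) (app T w - u) = 0" using k unfolding orth_def by blast
    then have "app T w - u = 0" using cinner_self_zero by blast
    then have "app T w = u" by simp
    then show ?thesis using wD unfolding w_def u_def by simp
  qed
  show ?thesis
    unfolding op_le_def A_def[symmetric]
  proof (intro conjI ballI)
    show "dom (comp_op (mp_inv A) T) \<subseteq> dom (comp_op T (mp_inv A))"
    proof
      fix x assume "x \<in> dom (comp_op (mp_inv A) T)"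
      then have xD: "x \<in> dom T" by simp
      show "x \<in> dom (comp_op T (mp_inv A))" using main[OF xD] mp_dom[of x] by simp
    qed
  next
    fix x assume "x \<in> dom (comp_op (mp_inv A) T)"
    then have xD: "x \<in> dom T" by simp
    show "app (comp_op T (mp_inv A)) x = app (comp_op (mp_inv A) T) x" using main[OF xD] by simp
  qed
qed

end
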